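(* Let $r,n\ge1$, $\gcd(a,b)=1$, and $T=\{(t^{-p},t^{-q})\}\subset(\mathbb{C}^* )^2$ with generic integers $p\gg q>0$. For every $\lambda\in B^r_{a,b;n}$, the dimension of the subspace $T^+_\lambda H^r_{a,b;n}$ of the tangent space to $H^r_{a,b;n}$ at $I_\lambda$ on which $T$ acts with positive weight equals the Betti statistic $\beta(\lambda)$.
   Context: $G_{a,b;n}$ is the cyclic group generated by $\mathrm{diag}(\zeta^a,\zeta^b)$, $\zeta$ a primitive $n$-th root of unity, acting on $\mathbb{C}[x,y]$ by $(x,y)\mapsto(\zeta^ax,\zeta^by)$; $H^r_{a,b;n}$ is the moduli scheme of $G_{a,b;n}$-invariant ideals $I$ with $\mathbb{C}[x,y]/I\cong\mathbb{C}[G_{a,b;n}]^r$; $(\mathbb{C}^* )^2$ acts by $(t_1,t_2)\cdot I=\{f(t_1x,t_2y):f\in I\}$. Partitions are Young diagrams $\lambda\subset\mathbb{Z}_{\ge0}^2$; $I_\lambda$ is generated by $x^iy^j$ for $(i,j)\notin\lambda$; $l(j)=\#\{i:(i,j)\in\lambda\}$, $c(i)=\#\{j:(i,j)\in\lambda\}$; box $(i,j)$ has color $ai+bj\bmod n$; $B^r_{a,b;n}$ is the set of partitions of $rn$ in which each color occurs exactly $r$ times. An arrow from $(l,s)$ to $(i',j')$ is invariant if $a(l-i')+b(s-j')\equiv0\pmod n$; $d_{i,j}$ is the arrow from $(l(j),j)$ to $(i,c(i)-1)$, $u_{i,j}$ the arrow from $(i,c(i))$ to $(l(j)-1,j)$;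 $\beta(\lambda)=\#\{(i,j)\in\lambda:d_{i,j}\text{ invariant}\}+\#\{(i,j)\in\lambda:u_{i,j}\text{ invariant and } i=l(j)-1\}$. *)

theory Defs
  imports Complex_Main "HOL-Library.Function_Algebras"
begin

type_synonym box = "nat \<times> nat"

definition young :: "box set \<Rightarrow> bool" where
  "young Y \<longleftrightarrow> finite Y \<and>
     (\<forall>i j i' j'. (i, j) \<in> Y \<and> i' \<le> i \<and> j' \<le> j \<longrightarrow> (i', j') \<in> Y)"

definition color :: "int \<Rightarrow> int \<Rightarrow> nat \<Rightarrow> box \<Rightarrow> int" where
  "color a b n p = (a * int (fst p) + b * int (snd p)) mod int n"

definition Bset :: "nat \<Rightarrow> int \<Rightarrow> int \<Rightarrow> nat \<Rightarrow> box set set" where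
  "Bset r a b n = {Y. young Y \<and> card Y = r * n \<and>
      (\<forall>k::int. 0 \<le> k \<and> k < int n \<longrightarrow> card {p \<in> Y. color a b n p = k} = r)}"

definition rowlen :: "box set \<Rightarrow> nat \<Rightarrow> nat" where
  "rowlen Y j = card {i. (i, j) \<in> Y}"

definition collen :: "box set \<Rightarrow> nat \<Rightarrow> nat" where
  "collen Y i = card {j. (i, j) \<in> Y}"

definition inv_arrow :: "int \<Rightarrow> int \<Rightarrow> nat \<Rightarrow> int \<times> int \<Rightarrow> int \<times> int \<Rightarrow> bool" where
  "inv_arrow a b n s t \<longleftrightarrow> (a * (fst s - fst t) + b * (snd s - snd t)) mod int n = 0"

definition betti :: "int \<Rightarrow> int \<Rightarrow> nat \<Rightarrow> box set \<Rightarrow> nat" where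
  "betti a b n Y =
     card {(i, j) \<in> Y. inv_arrow a b n (int (rowlen Y j), int j)
                                       (int i, int (collen Y i) - 1)}
   + card {(i, j) \<in> Y. inv_arrow a b n (int i, int (collen Y i))
                                       (int (rowlen Y j) - 1, int j)
                      \<and> int i = int (rowlen Y j) - 1}"

text \<open>Tangent space to H^r_{a,b;n} at I_lambda: the space Hom_{C[x,y]}(I_lambda, C[x,y]/I_lambda)^G.
  A C-linear map phi : I_lambda \<rightarrow> C[x,y]/I_lambda is recorded by its matrix M with respect to the
  monomial basis {x^m : m \<notin> lambda} of I_lambda and the monomial basis {x^k : k \<in> lambda} of
  C[x,y]/I_lambda: M m k = coefficient of x^k in phi(x^m) (M vanishes off these index sets).
  C[x,y]-linearity means phi commutes with multiplication by x and by y; G-equivariance means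
  that phi maps the zeta^c-eigenspace to the zeta^c-eigenspace, i.e. nonzero entries connect
  monomials of equal color.\<close>
definition tangent_space :: "int \<Rightarrow> int \<Rightarrow> nat \<Rightarrow> box set \<Rightarrow> (box \<Rightarrow> box \<Rightarrow> complex) set" where
  "tangent_space a b n Y = {M.
     (\<forall>m k. M m k \<noteq> 0 \<longrightarrow> m \<notin> Y \<and> k \<in> Y) \<and>
     (\<forall>m k. m \<notin> Y \<and> k \<in> Y \<longrightarrow>
        M (fst m + 1, snd m) k = (if fst k \<ge> 1 then M m (fst k - 1, snd k) else 0)) \<and>
     (\<forall>m k. m \<notin> Y \<and> k \<in> Y \<longrightarrow>
        M (fst m, snd m + 1) k = (if snd k \<ge> 1 then M m (fst k, snd k - 1) else 0)) \<and>
     (\<forall>m k. M m k \<noteq> 0 \<longrightarrow> color a b n m = color a b n k)}"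

text \<open>The torus (t1,t2) acts on the tangent vector M by (t.M) m k = t1^(k1-m1) t2^(k2-m2) M m k
  (induced by (t.I) = {f(t1 x, t2 y)}).  Along T = {(t^-p, t^-q)} the entry (m,k) thus has
  weight -(p(k1-m1) + q(k2-m2)).\<close>
definition T_weight :: "int \<Rightarrow> int \<Rightarrow> box \<Rightarrow> box \<Rightarrow> int" where
  "T_weight p q m k = - (p * (int (fst k) - int (fst m)) + q * (int (snd k) - int (snd m)))"

text \<open>T^+_lambda H: the sum of the positive T-weight spaces of the tangent space.\<close>
definition tangent_pos :: "int \<Rightarrow> int \<Rightarrow> nat \<Rightarrow> int \<Rightarrow> int \<Rightarrow> box set \<Rightarrow> (box \<Rightarrow> box \<Rightarrow> complex) set" where
  "tangent_pos a b n p q Y =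
     {M \<in> tangent_space a b n Y. \<forall>m k. M m k \<noteq> 0 \<longrightarrow> T_weight p q m k > 0}"

definition mscale :: "complex \<Rightarrow> (box \<Rightarrow> box \<Rightarrow> complex) \<Rightarrow> (box \<Rightarrow> box \<Rightarrow> complex)" where
  "mscale c M = (\<lambda>m k. c * M m k)"

definition cdim :: "(box \<Rightarrow> box \<Rightarrow> complex) set \<Rightarrow> nat" where
  "cdim S = vector_space.dim mscale S"

end

theory Submission
  imports Defs
begin



lemma vs_mscale: "vector_space mscale"
  by unfold_locales (simp_all add: mscale_def fun_eq_iff algebra_simps)

lemma sum_fun_apply2: "(sum F S) m k = (\<Sum>x\<in>S. F x m k)"
  for F :: "'c \<Rightarrow> box \<Rightarrow> box \<Rightarrow> complex"
proof (induction S rule: infinite_finite_induct)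
  case (infinite A) then show ?case by simp
next
  case empty then show ?case by simp
next
  case (insert x S) then show ?case by simp
qed

lemma dual_independent:
  assumes pt: "\<And>v. v \<in> B \<Longrightarrow> \<exists>m k. v m k = 1 \<and> (\<forall>w\<in>B. w \<noteq> v \<longrightarrow> w m k = 0)"
  shows "\<not> module.dependent mscale B"
proof
  interpret vs: vector_space mscale by (rule vs_mscale)
  assume "vs.dependent B"
  then obtain t u where t: "finite t" "t \<subseteq> B" "(\<Sum>v\<in>t. mscale (u v) v) = 0" and ex: "\<exists>v\<in>t. u v \<noteq> 0"
    unfolding vs.dependent_explicit by (elim exE conjE) (rule that)
  then obtain v where v: "v \<in> t" "u v \<noteq> 0" by (elim bexE)
  obtain m k where mk: "v m k = 1" "\<forall>w\<in>B. w \<noteq> v \<longrightarrow> w m k = 0" using pt[of v] v t by blast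
  have "0 = (\<Sum>w\<in>t. mscale (u w) w) m k" using t(3) by (simp only: zero_fun_def)
  also have "\<dots> = (\<Sum>w\<in>t. u w * w m k)" by (simp only: sum_fun_apply2 mscale_def)
  also have "\<dots> = u v * v m k"
  proof -
    have "(\<Sum>w\<in>t. u w * w m k) = u v * v m k + (\<Sum>w\<in>t - {v}. u w * w m k)"
      by (rule sum.remove[OF t(1) v(1)])
    moreover have "(\<Sum>w\<in>t - {v}. u w * w m k) = 0"
    proof (rule sum.neutral, rule ballI)
      fix w assume w: "w \<in> t - {v}"
      then have "w \<in> B" "w \<noteq> v" using t(2) by auto
      then have "w m k = 0" using mk(2) by simp
      then show "u w * w m k = 0" by simp
    qed
    ultimately show ?thesis by simp
  qed
  finally show False using mk(1) v(2) by simp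
qed




lemma downset_nat:
  fixes S :: "nat set"
  assumes "finite S" "\<And>x y. x \<in> S \<Longrightarrow> y \<le> x \<Longrightarrow> y \<in> S"
  shows "x \<in> S \<longleftrightarrow> x < card S"
proof
  assume "x \<in> S"
  then have "{..x} \<subseteq> S" using assms(2) by auto
  then have "card {..x} \<le> card S" using assms(1) by (rule card_mono[rotated])
  then show "x < card S" by simp
next
  assume x: "x < card S"
  show "x \<in> S"
  proof (rule ccontr)
    assume "x \<notin> S"
    then have "S \<subseteq> {..<x}" using assms(2) by (metis lessThan_iff not_le subsetI)
    then have "card S \<le> x" using card_mono[of "{..<x}" S] by simp
    then show False using x by simp
  qed
qed

lemma young_finite: "young Y \<Longrightarrow> finite Y" by (simp add: young_def)

lemma young_down: "young Y \<Longrightarrow> (i, j) \<in> Y \<Longrightarrow> i' \<le> i \<Longrightarrow> j' \<le> j \<Longrightarrow> (i', j') \<in> Y"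
  unfolding young_def by blast

lemma row_mem: assumes "young Y" shows "(i, j) \<in> Y \<longleftrightarrow> i < rowlen Y j"
proof -
  have fin: "finite {i. (i, j) \<in> Y}"
    by (rule finite_subset[of _ "fst ` Y"]) (use young_finite[OF assms] in force)+
  show ?thesis unfolding rowlen_def
    using downset_nat[OF fin, of i] young_down[OF assms] by auto
qed

lemma col_mem: assumes "young Y" shows "(i, j) \<in> Y \<longleftrightarrow> j < collen Y i"
proof -
  have fin: "finite {j. (i, j) \<in> Y}"
    by (rule finite_subset[of _ "snd ` Y"]) (use young_finite[OF assms] in force)+
  show ?thesis unfolding collen_def
    using downset_nat[OF fin, of j] young_down[OF assms] by auto
qed

lemma rowlen_anti: assumes "young Y" "j \<le> j'" shows "rowlen Y j' \<le> rowlen Y j"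
proof (rule ccontr)
  assume "\<not> ?thesis"
  then have "(rowlen Y j, j') \<in> Y" using row_mem[OF assms(1)] by simp
  then have "(rowlen Y j, j) \<in> Y" using young_down[OF assms(1)] assms(2) by blast
  then show False using row_mem[OF assms(1)] by simp
qed

lemma collen_anti: assumes "young Y" "i \<le> i'" shows "collen Y i' \<le> collen Y i"
proof (rule ccontr)
  assume "\<not> ?thesis"
  then have "(i', collen Y i) \<in> Y" using col_mem[OF assms(1)] by simp
  then have "(i, collen Y i) \<in> Y" using young_down[OF assms(1)] assms(2) by blast
  then show False using col_mem[OF assms(1)] by simp
qed

lemma box_bound: assumes "young Y" "(i, j) \<in> Y" shows "i < card Y" "j < card Y"
proof -
  have "(\<lambda>i'. (i', j)) ` {..i} \<subseteq> Y" using young_down[OF assms(1,2)] by auto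
  then have "card ((\<lambda>i'. (i', j)) ` {..i}) \<le> card Y"
    using young_finite[OF assms(1)] by (rule card_mono[rotated])
  moreover have "card ((\<lambda>i'. (i', j)) ` {..i}) = Suc i"
    by (subst card_image) (auto simp: inj_on_def)
  ultimately show "i < card Y" by simp
next
  have "(\<lambda>j'. (i, j')) ` {..j} \<subseteq> Y" using young_down[OF assms(1,2)] by auto
  then have "card ((\<lambda>j'. (i, j')) ` {..j}) \<le> card Y"
    using young_finite[OF assms(1)] by (rule card_mono[rotated])
  moreover have "card ((\<lambda>j'. (i, j')) ` {..j}) = Suc j"
    by (subst card_image) (auto simp: inj_on_def)
  ultimately show "j < card Y" by simp
qed

lemma T_supp: "M \<in> tangent_space a b n Y \<Longrightarrow> M m k \<noteq> 0 \<Longrightarrow> m \<notin> Y \<and> k \<in> Y"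
  unfolding tangent_space_def by blast

lemma T_col: "M \<in> tangent_space a b n Y \<Longrightarrow> M m k \<noteq> 0 \<Longrightarrow> color a b n m = color a b n k"
  unfolding tangent_space_def by blast

lemma T_x: "M \<in> tangent_space a b n Y \<Longrightarrow> (x, y) \<notin> Y \<Longrightarrow> (k1, k2) \<in> Y \<Longrightarrow>
   M (x + 1, y) (k1, k2) = (if k1 \<ge> 1 then M (x, y) (k1 - 1, k2) else 0)"
  unfolding tangent_space_def by (drule CollectD, elim conjE, drule spec[of _ "(x,y)"], drule spec[of _ "(k1,k2)"]) simp

lemma T_y: "M \<in> tangent_space a b n Y \<Longrightarrow> (x, y) \<notin> Y \<Longrightarrow> (k1, k2) \<in> Y \<Longrightarrow>
   M (x, y + 1) (k1, k2) = (if k2 \<ge> 1 then M (x, y) (k1, k2 - 1) else 0)"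
  unfolding tangent_space_def
  by (drule CollectD, elim conjE, rotate_tac 2, drule spec[of _ "(x,y)"], drule spec[of _ "(k1,k2)"]) simp

lemma leftwalk:
  assumes Y: "young Y" and M: "M \<in> tangent_space a b n Y" and xy: "(x, y) \<notin> Y"
  shows "M (x + t, y) (k1, k2) \<noteq> 0 \<Longrightarrow> t \<le> k1 \<and> M (x, y) (k1 - t, k2) = M (x + t, y) (k1, k2)"
proof (induction t arbitrary: k1)
  case 0 then show ?case by simp
next
  case (Suc t)
  have k: "(k1, k2) \<in> Y" using T_supp[OF M Suc.prems] by simp
  have nY: "(x + t, y) \<notin> Y" using xy young_down[OF Y, of "x+t" y x y] by auto
  have eq: "M (x + Suc t, y) (k1, k2) = (if k1 \<ge> 1 then M (x + t, y) (k1 - 1, k2) else 0)"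
    using T_x[OF M nY k] by simp
  then have k1: "k1 \<ge> 1" and nz: "M (x + t, y) (k1 - 1, k2) \<noteq> 0" using Suc.prems by (auto split: if_splits)
  have ih: "t \<le> k1 - 1" "M (x, y) (k1 - 1 - t, k2) = M (x + t, y) (k1 - 1, k2)"
    using Suc.IH[OF nz] by auto
  show ?case
  proof (intro conjI)
    show "Suc t \<le> k1" using ih(1) k1 by linarith
    show "M (x, y) (k1 - Suc t, k2) = M (x + Suc t, y) (k1, k2)" using ih(2) eq k1 by simp
  qed
qed

lemma downwalk:
  assumes Y: "young Y" and M: "M \<in> tangent_space a b n Y" and xy: "(x, y) \<notin> Y"
  shows "M (x, y + t) (k1, k2) \<noteq> 0 \<Longrightarrow> t \<le> k2 \<and> M (x, y) (k1, k2 - t) = M (x, y + t) (k1, k2)"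
proof (induction t arbitrary: k2)
  case 0 then show ?case by simp
next
  case (Suc t)
  have k: "(k1, k2) \<in> Y" using T_supp[OF M Suc.prems] by simp
  have nY: "(x, y + t) \<notin> Y" using xy young_down[OF Y, of x "y+t" x y] by auto
  have eq: "M (x, y + Suc t) (k1, k2) = (if k2 \<ge> 1 then M (x, y + t) (k1, k2 - 1) else 0)"
    using T_y[OF M nY k] by simp
  then have k2: "k2 \<ge> 1" and nz: "M (x, y + t) (k1, k2 - 1) \<noteq> 0" using Suc.prems by (auto split: if_splits)
  have ih: "t \<le> k2 - 1" "M (x, y) (k1, k2 - 1 - t) = M (x, y + t) (k1, k2 - 1)"
    using Suc.IH[OF nz] by auto
  show ?case
  proof (intro conjI)
    show "Suc t \<le> k2" using ih(1) k2 by linarith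
    show "M (x, y) (k1, k2 - Suc t) = M (x, y + Suc t) (k1, k2)" using ih(2) eq k2 by simp
  qed
qed




lemma L2d_claim:
  assumes Y: "young Y" and M: "M \<in> tangent_space a b n Y"
    and van: "\<And>i j. (i, j) \<in> Y \<Longrightarrow> color a b n (rowlen Y j, j) = color a b n (i, collen Y i - 1)
                 \<Longrightarrow> M (rowlen Y j, j) (i, collen Y i - 1) = 0"
  shows "card Y - k2 = N \<Longrightarrow> M (rowlen Y j, j) (k1, k2) \<noteq> 0 \<Longrightarrow> k1 < rowlen Y j \<Longrightarrow> False"
proof (induction N arbitrary: j k1 k2 rule: less_induct)
  case (less N)
  have nz: "M (rowlen Y j, j) (k1, k2) \<noteq> 0" by fact
  have kY: "(k1, k2) \<in> Y" and mY: "(rowlen Y j, j) \<notin> Y" using T_supp[OF M nz] by auto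
  have box: "(k1, j) \<in> Y" using less.prems(3) row_mem[OF Y] by simp
  show False
  proof (cases "(k1, k2 + 1) \<in> Y")
    case False
    then have "collen Y k1 = k2 + 1" using col_mem[OF Y, of k1] kY by auto
    then have "M (rowlen Y j, j) (k1, collen Y k1 - 1) \<noteq> 0" using nz by simp
    moreover have "color a b n (rowlen Y j, j) = color a b n (k1, collen Y k1 - 1)"
      using T_col[OF M nz] \<open>collen Y k1 = k2 + 1\<close> by simp
    ultimately show False using van[OF box] by simp
  next
    case True
    have e1: "M (rowlen Y j, j + 1) (k1, k2 + 1) = M (rowlen Y j, j) (k1, k2)"
      using T_y[OF M mY True] by simp
    define t where "t = rowlen Y j - rowlen Y (j + 1)"
    have le: "rowlen Y (j + 1) \<le> rowlen Y j" using rowlen_anti[OF Y] by simp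
    have x: "rowlen Y (j + 1) + t = rowlen Y j" using le t_def by simp
    have nY: "(rowlen Y (j + 1), j + 1) \<notin> Y" using row_mem[OF Y] by simp
    have nz2: "M (rowlen Y (j + 1) + t, j + 1) (k1, k2 + 1) \<noteq> 0" using e1 nz x by simp
    from leftwalk[OF Y M nY nz2] have w: "t \<le> k1" "M (rowlen Y (j + 1), j + 1) (k1 - t, k2 + 1) \<noteq> 0"
      using nz2 by auto
    have lt: "k1 - t < rowlen Y (j + 1)" using less.prems(3) x w(1) by linarith
    have "k2 + 1 < card Y" using box_bound(2)[OF Y True] .
    then have "card Y - (k2 + 1) < N" using less.prems(1) by linarith
    from less.IH[OF this refl w(2) lt] show False .
  qed
qed

lemma L2d:
  assumes Y: "young Y" and M: "M \<in> tangent_space a b n Y"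
    and van: "\<And>i j. (i, j) \<in> Y \<Longrightarrow> color a b n (rowlen Y j, j) = color a b n (i, collen Y i - 1)
                 \<Longrightarrow> M (rowlen Y j, j) (i, collen Y i - 1) = 0"
    and nz: "M (m1, m2) (k1, k2) \<noteq> 0" and lt: "k1 < m1"
  shows False
proof -
  have mY: "(m1, m2) \<notin> Y" using T_supp[OF M nz] by auto
  then have ge: "rowlen Y m2 \<le> m1" using row_mem[OF Y] by simp
  define t where "t = m1 - rowlen Y m2"
  have x: "rowlen Y m2 + t = m1" using ge t_def by simp
  have nY: "(rowlen Y m2, m2) \<notin> Y" using row_mem[OF Y] by simp
  have nz2: "M (rowlen Y m2 + t, m2) (k1, k2) \<noteq> 0" using nz x by simp
  from leftwalk[OF Y M nY nz2] have w: "t \<le> k1" "M (rowlen Y m2, m2) (k1 - t, k2) \<noteq> 0"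
    using nz2 by auto
  have "k1 - t < rowlen Y m2" using lt x w(1) by linarith
  from L2d_claim[OF Y M van refl w(2) this] show False .
qed

lemma L2u_claim:
  assumes Y: "young Y" and M: "M \<in> tangent_space a b n Y"
    and van: "\<And>i j. (i, j) \<in> Y \<Longrightarrow> i = rowlen Y j - 1 \<Longrightarrow> color a b n (i, collen Y i) = color a b n (i, j)
                 \<Longrightarrow> M (i, collen Y i) (i, j) = 0"
  shows "card Y - i = N \<Longrightarrow> M (i, collen Y i) (i, k2) \<noteq> 0 \<Longrightarrow> False"
proof (induction N arbitrary: i k2 rule: less_induct)
  case (less N)
  have nz: "M (i, collen Y i) (i, k2) \<noteq> 0" by fact
  have kY: "(i, k2) \<in> Y" and mY: "(i, collen Y i) \<notin> Y" using T_supp[OF M nz] by auto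
  show False
  proof (cases "(i + 1, k2) \<in> Y")
    case False
    then have "\<not> i + 1 < rowlen Y k2" "i < rowlen Y k2" using row_mem[OF Y, of "i+1" k2] row_mem[OF Y, of i k2] kY by auto
    then have "rowlen Y k2 = i + 1" by linarith
    then have "i = rowlen Y k2 - 1" by simp
    moreover have "color a b n (i, collen Y i) = color a b n (i, k2)"
      using T_col[OF M nz] by simp
    ultimately show False using van[OF kY] nz by simp
  next
    case True
    have e1: "M (i + 1, collen Y i) (i + 1, k2) = M (i, collen Y i) (i, k2)"
      using T_x[OF M mY True] by simp
    define t where "t = collen Y i - collen Y (i + 1)"
    have le: "collen Y (i + 1) \<le> collen Y i" using collen_anti[OF Y] by simp
    have x: "collen Y (i + 1) + t = collen Y i" using le t_def by simp
    have nY: "(i + 1, collen Y (i + 1)) \<notin> Y" using col_mem[OF Y] by simp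
    have nz2: "M (i + 1, collen Y (i + 1) + t) (i + 1, k2) \<noteq> 0" using e1 nz x by simp
    from downwalk[OF Y M nY nz2] have w: "M (i + 1, collen Y (i + 1)) (i + 1, k2 - t) \<noteq> 0"
      using nz2 by auto
    have "i + 1 < card Y" using box_bound(1)[OF Y True] .
    then have "card Y - (i + 1) < N" using less.prems(1) by linarith
    from less.IH[OF this refl w] show False .
  qed
qed

lemma L2u:
  assumes Y: "young Y" and M: "M \<in> tangent_space a b n Y"
    and van: "\<And>i j. (i, j) \<in> Y \<Longrightarrow> i = rowlen Y j - 1 \<Longrightarrow> color a b n (i, collen Y i) = color a b n (i, j)
                 \<Longrightarrow> M (i, collen Y i) (i, j) = 0"
    and nz: "M (m1, m2) (m1, k2) \<noteq> 0"
  shows False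
proof -
  have mY: "(m1, m2) \<notin> Y" using T_supp[OF M nz] by auto
  then have ge: "collen Y m1 \<le> m2" using col_mem[OF Y] by simp
  define t where "t = m2 - collen Y m1"
  have x: "collen Y m1 + t = m2" using ge t_def by simp
  have nY: "(m1, collen Y m1) \<notin> Y" using col_mem[OF Y] by simp
  have nz2: "M (m1, collen Y m1 + t) (m1, k2) \<noteq> 0" using nz x by simp
  from downwalk[OF Y M nY nz2] have w: "M (m1, collen Y m1) (m1, k2 - t) \<noteq> 0"
    using nz2 by auto
  from L2u_claim[OF Y M van refl w] show False .
qed




lemma color_shift:
  assumes "color a b n p = color a b n q"
    and "int (fst p') - int (fst q') = int (fst p) - int (fst q)"
    and "int (snd p') - int (snd q') = int (snd p) - int (snd q)"
  shows "color a b n p' = color a b n q'"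
proof -
  have "int n dvd (a * int (fst p) + b * int (snd p)) - (a * int (fst q) + b * int (snd q))"
    using assms(1) unfolding color_def by (simp add: mod_eq_dvd_iff)
  moreover have "(a * int (fst p) + b * int (snd p)) - (a * int (fst q) + b * int (snd q))
      = a * (int (fst p) - int (fst q)) + b * (int (snd p) - int (snd q))" by (simp add: algebra_simps)
  moreover have "(a * int (fst p') + b * int (snd p')) - (a * int (fst q') + b * int (snd q'))
      = a * (int (fst p') - int (fst q')) + b * (int (snd p') - int (snd q'))" by (simp add: algebra_simps)
  ultimately have "int n dvd (a * int (fst p') + b * int (snd p')) - (a * int (fst q') + b * int (snd q'))"
    using assms(2,3) by simp
  then show ?thesis unfolding color_def by (simp add: mod_eq_dvd_iff)
qed

definition lexpos :: "box \<Rightarrow> box \<Rightarrow> bool" where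
  "lexpos m k \<longleftrightarrow> fst k < fst m \<or> (fst k = fst m \<and> snd k < snd m)"

definition TP :: "int \<Rightarrow> int \<Rightarrow> nat \<Rightarrow> box set \<Rightarrow> (box \<Rightarrow> box \<Rightarrow> complex) set" where
  "TP a b n Y = {M \<in> tangent_space a b n Y. \<forall>m k. M m k \<noteq> 0 \<longrightarrow> lexpos m k}"

definition Pd :: "box set \<Rightarrow> nat \<Rightarrow> nat \<Rightarrow> box \<Rightarrow> box \<Rightarrow> bool" where
  "Pd Y i0 j0 m k \<longleftrightarrow> (let x0 = rowlen Y j0; \<alpha> = x0 - i0; \<beta> = collen Y i0 - 1 - j0 in
     m \<notin> Y \<and> k \<in> Y \<and> fst k + \<alpha> = fst m \<and> snd k = snd m + \<beta> \<and> x0 \<le> fst m \<and> snd m \<le> j0 \<and>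
     (\<forall>j'. snd m \<le> j' \<and> j' < j0 \<longrightarrow> (rowlen Y j' - \<alpha>, j' + 1 + \<beta>) \<in> Y))"

definition Ed :: "box set \<Rightarrow> nat \<Rightarrow> nat \<Rightarrow> box \<Rightarrow> box \<Rightarrow> complex" where
  "Ed Y i0 j0 m k = (if Pd Y i0 j0 m k then 1 else 0)"

definition Pu :: "box set \<Rightarrow> nat \<Rightarrow> nat \<Rightarrow> box \<Rightarrow> box \<Rightarrow> bool" where
  "Pu Y i0 j0 m k \<longleftrightarrow> (let \<gamma> = collen Y i0 - j0 in
     m \<notin> Y \<and> k \<in> Y \<and> fst k = fst m \<and> snd k + \<gamma> = snd m \<and> collen Y i0 \<le> snd m \<and> fst m \<le> i0 \<and>
     (\<forall>i'. fst m \<le> i' \<and> i' < i0 \<longrightarrow> (i' + 1, collen Y i' - \<gamma>) \<in> Y))"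

definition Eu :: "box set \<Rightarrow> nat \<Rightarrow> nat \<Rightarrow> box \<Rightarrow> box \<Rightarrow> complex" where
  "Eu Y i0 j0 m k = (if Pu Y i0 j0 m k then 1 else 0)"

lemma tangent_spaceI:
  assumes "\<And>m k. M m k \<noteq> 0 \<Longrightarrow> m \<notin> Y \<and> k \<in> Y"
    and "\<And>x y k1 k2. (x, y) \<notin> Y \<Longrightarrow> (k1, k2) \<in> Y \<Longrightarrow>
          M (x + 1, y) (k1, k2) = (if k1 \<ge> 1 then M (x, y) (k1 - 1, k2) else 0)"
    and "\<And>x y k1 k2. (x, y) \<notin> Y \<Longrightarrow> (k1, k2) \<in> Y \<Longrightarrow>
          M (x, y + 1) (k1, k2) = (if k2 \<ge> 1 then M (x, y) (k1, k2 - 1) else 0)"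
    and "\<And>m k. M m k \<noteq> 0 \<Longrightarrow> color a b n m = color a b n k"
  shows "M \<in> tangent_space a b n Y"
  unfolding tangent_space_def
proof (intro CollectI conjI allI impI)
  fix m k assume "M m k \<noteq> 0" then show "m \<notin> Y" "k \<in> Y" using assms(1) by auto
next
  fix m k assume "M m k \<noteq> 0" then show "color a b n m = color a b n k" using assms(4) by auto
next
  fix m k :: box assume "m \<notin> Y \<and> k \<in> Y"
  then show "M (fst m + 1, snd m) k = (if 1 \<le> fst k then M m (fst k - 1, snd k) else 0)"
    using assms(2)[of "fst m" "snd m" "fst k" "snd k"] by simp
next
  fix m k :: box assume "m \<notin> Y \<and> k \<in> Y"
  then show "M (fst m, snd m + 1) k = (if 1 \<le> snd k then M m (fst k, snd k - 1) else 0)"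
    using assms(3)[of "fst m" "snd m" "fst k" "snd k"] by simp
qed

context
  fixes Y i0 j0
  assumes Y: "young Y" and box: "(i0, j0) \<in> Y"
begin

lemma Pd_x:
  assumes m: "(x, y) \<notin> Y" and k: "(k1, k2) \<in> Y"
  shows "Pd Y i0 j0 (x + 1, y) (k1, k2) \<longleftrightarrow> (k1 \<ge> 1 \<and> Pd Y i0 j0 (x, y) (k1 - 1, k2))"
proof -
  define x0 where "x0 = rowlen Y j0"
  have i0: "i0 < x0" using box row_mem[OF Y] x0_def by simp
  have m1: "(x + 1, y) \<notin> Y" using m young_down[OF Y, of "x+1" y x y] by auto
  have k': "k1 \<ge> 1 \<Longrightarrow> (k1 - 1, k2) \<in> Y" using k young_down[OF Y, of k1 k2 "k1-1" k2] by auto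
  have H: "\<not> (x + 1 = x0 \<and> y \<le> j0)"
  proof
    assume h: "x + 1 = x0 \<and> y \<le> j0"
    then have "x0 \<le> rowlen Y y" using rowlen_anti[OF Y] x0_def by auto
    then have "(x, y) \<in> Y" using row_mem[OF Y] h by simp
    then show False using m by simp
  qed
  show ?thesis
    unfolding Pd_def Let_def x0_def[symmetric]
    using m m1 k k' H i0 by (cases "k1 \<ge> 1") auto
qed

lemma Pd_y:
  assumes m: "(x, y) \<notin> Y" and k: "(k1, k2) \<in> Y"
  shows "Pd Y i0 j0 (x, y + 1) (k1, k2) \<longleftrightarrow> (k2 \<ge> 1 \<and> Pd Y i0 j0 (x, y) (k1, k2 - 1))"
proof -
  define x0 where "x0 = rowlen Y j0"
  define \<alpha> where "\<alpha> = x0 - i0"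
  define \<beta> where "\<beta> = collen Y i0 - 1 - j0"
  have i0: "i0 < x0" using box row_mem[OF Y] x0_def by simp
  have cj: "j0 < collen Y i0" using box col_mem[OF Y] by simp
  have m1: "(x, y + 1) \<notin> Y" using m young_down[OF Y, of x "y+1" x y] by auto
  have k': "k2 \<ge> 1 \<Longrightarrow> (k1, k2 - 1) \<in> Y" using k young_down[OF Y, of k1 k2 k1 "k2-1"] by auto
  have rx: "rowlen Y y \<le> x" using m row_mem[OF Y] by (simp add: not_less)
  have H1: "x0 \<le> x \<Longrightarrow> k1 + \<alpha> = x \<Longrightarrow> k2 = y + 1 + \<beta> \<Longrightarrow> (rowlen Y y - \<alpha>, y + 1 + \<beta>) \<in> Y"
    using young_down[OF Y k, of "rowlen Y y - \<alpha>" "y + 1 + \<beta>"] rx by simp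
  have H2: "\<not> (x0 \<le> x \<and> k1 + \<alpha> = x \<and> k2 = j0 + 1 + \<beta>)"
  proof
    assume h: "x0 \<le> x \<and> k1 + \<alpha> = x \<and> k2 = j0 + 1 + \<beta>"
    then have "k1 + (x0 - i0) = x" "x0 \<le> x" using \<alpha>_def by auto
    then have "i0 \<le> k1" using i0 by linarith
    moreover have "k2 = collen Y i0" using h \<beta>_def cj by simp
    ultimately have "(i0, collen Y i0) \<in> Y" using young_down[OF Y k] by simp
    then show False using col_mem[OF Y] by simp
  qed
  have H3: "\<And>j'. (y \<le> j' \<and> j' < j0) = (j' = y \<and> y < j0 \<or> (y + 1 \<le> j' \<and> j' < j0))" by auto
  show ?thesis
    unfolding Pd_def Let_def x0_def[symmetric] \<alpha>_def[symmetric] \<beta>_def[symmetric]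
  proof (intro iffI; elim conjE)
    assume h: "(x, y + 1) \<notin> Y" "(k1, k2) \<in> Y" "fst (k1, k2) + \<alpha> = fst (x, y + 1)"
      "snd (k1, k2) = snd (x, y + 1) + \<beta>" "x0 \<le> fst (x, y + 1)" "snd (x, y + 1) \<le> j0"
      "\<forall>j'. snd (x, y + 1) \<le> j' \<and> j' < j0 \<longrightarrow> (rowlen Y j' - \<alpha>, j' + 1 + \<beta>) \<in> Y"
    have l: "(rowlen Y y - \<alpha>, y + 1 + \<beta>) \<in> Y" using H1 h by simp
    have all: "\<forall>j'. y \<le> j' \<and> j' < j0 \<longrightarrow> (rowlen Y j' - \<alpha>, j' + 1 + \<beta>) \<in> Y"
    proof (intro allI impI)
      fix j' assume "y \<le> j' \<and> j' < j0"
      then have "j' = y \<or> (y + 1 \<le> j' \<and> j' < j0)" by auto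
      then show "(rowlen Y j' - \<alpha>, j' + 1 + \<beta>) \<in> Y" using l h(7) by auto
    qed
    show "1 \<le> k2 \<and> (x, y) \<notin> Y \<and> (k1, k2 - 1) \<in> Y \<and> fst (k1, k2 - 1) + \<alpha> = fst (x, y) \<and>
      snd (k1, k2 - 1) = snd (x, y) + \<beta> \<and> x0 \<le> fst (x, y) \<and> snd (x, y) \<le> j0 \<and>
      (\<forall>j'. snd (x, y) \<le> j' \<and> j' < j0 \<longrightarrow> (rowlen Y j' - \<alpha>, j' + 1 + \<beta>) \<in> Y)"
      using h all m k' by auto
  next
    assume h: "1 \<le> k2" "(x, y) \<notin> Y" "(k1, k2 - 1) \<in> Y" "fst (k1, k2 - 1) + \<alpha> = fst (x, y)"
      "snd (k1, k2 - 1) = snd (x, y) + \<beta>" "x0 \<le> fst (x, y)" "snd (x, y) \<le> j0"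
      "\<forall>j'. snd (x, y) \<le> j' \<and> j' < j0 \<longrightarrow> (rowlen Y j' - \<alpha>, j' + 1 + \<beta>) \<in> Y"
    have "y \<noteq> j0" using H2 h by auto
    then show "(x, y + 1) \<notin> Y \<and> (k1, k2) \<in> Y \<and> fst (k1, k2) + \<alpha> = fst (x, y + 1) \<and>
      snd (k1, k2) = snd (x, y + 1) + \<beta> \<and> x0 \<le> fst (x, y + 1) \<and> snd (x, y + 1) \<le> j0 \<and>
      (\<forall>j'. snd (x, y + 1) \<le> j' \<and> j' < j0 \<longrightarrow> (rowlen Y j' - \<alpha>, j' + 1 + \<beta>) \<in> Y)"
      using h m1 k by auto
  qed
qed

lemma Ed_TP:
  assumes inv: "color a b n (rowlen Y j0, j0) = color a b n (i0, collen Y i0 - 1)"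
  shows "Ed Y i0 j0 \<in> TP a b n Y"
proof -
  define x0 where "x0 = rowlen Y j0"
  have i0: "i0 < x0" using box row_mem[OF Y] x0_def by simp
  have cj: "j0 < collen Y i0" using box col_mem[OF Y] by simp
  have P: "Pd Y i0 j0 m k \<Longrightarrow> m \<notin> Y \<and> k \<in> Y \<and> fst k + (x0 - i0) = fst m \<and> snd k = snd m + (collen Y i0 - 1 - j0)"
    for m k unfolding Pd_def Let_def x0_def by auto
  have TS: "Ed Y i0 j0 \<in> tangent_space a b n Y"
  proof (rule tangent_spaceI)
    fix m k assume "Ed Y i0 j0 m k \<noteq> 0"
    then have "Pd Y i0 j0 m k" unfolding Ed_def by (auto split: if_splits)
    then show "m \<notin> Y \<and> k \<in> Y" using P by blast
  next
    fix x y k1 k2 assume "(x, y) \<notin> Y" "(k1, k2) \<in> Y"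
    from Pd_x[OF this] show "Ed Y i0 j0 (x + 1, y) (k1, k2) = (if k1 \<ge> 1 then Ed Y i0 j0 (x, y) (k1 - 1, k2) else 0)"
      unfolding Ed_def by auto
  next
    fix x y k1 k2 assume "(x, y) \<notin> Y" "(k1, k2) \<in> Y"
    from Pd_y[OF this] show "Ed Y i0 j0 (x, y + 1) (k1, k2) = (if k2 \<ge> 1 then Ed Y i0 j0 (x, y) (k1, k2 - 1) else 0)"
      unfolding Ed_def by auto
  next
    fix m k assume "Ed Y i0 j0 m k \<noteq> 0"
    then have "Pd Y i0 j0 m k" unfolding Ed_def by (auto split: if_splits)
    then have h: "fst k + (x0 - i0) = fst m" "snd k = snd m + (collen Y i0 - 1 - j0)" using P by auto
    show "color a b n m = color a b n k"
    proof (rule color_shift[OF inv])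
      show "int (fst m) - int (fst k) = int (fst (rowlen Y j0, j0)) - int (fst (i0, collen Y i0 - 1))"
        using h(1) i0 x0_def by auto
      show "int (snd m) - int (snd k) = int (snd (rowlen Y j0, j0)) - int (snd (i0, collen Y i0 - 1))"
        using h(2) cj by auto
    qed
  qed
  show ?thesis unfolding TP_def
  proof (intro CollectI conjI TS allI impI)
    fix m k assume "Ed Y i0 j0 m k \<noteq> 0"
    then have "Pd Y i0 j0 m k" unfolding Ed_def by (auto split: if_splits)
    then have "fst k + (x0 - i0) = fst m" using P by auto
    then show "lexpos m k" unfolding lexpos_def using i0 by auto
  qed
qed

lemma Ed_d:
  assumes ij: "(i, j) \<in> Y"
  shows "Ed Y i0 j0 (rowlen Y j, j) (i, collen Y i - 1) = (if (i, j) = (i0, j0) then 1 else 0)"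
proof -
  define x0 where "x0 = rowlen Y j0"
  define \<alpha> where "\<alpha> = x0 - i0"
  define \<beta> where "\<beta> = collen Y i0 - 1 - j0"
  have i0: "i0 < x0" using box row_mem[OF Y] x0_def by simp
  have cj: "j0 < collen Y i0" using box col_mem[OF Y] by simp
  have il: "i < rowlen Y j" using ij row_mem[OF Y] by simp
  have ci: "j < collen Y i" using ij col_mem[OF Y] by simp
  have nr: "\<And>j. (rowlen Y j, j) \<notin> Y" using row_mem[OF Y] by simp
  have nc: "\<And>i. (i, collen Y i) \<notin> Y" using col_mem[OF Y] by simp
  have ctop: "(i, collen Y i - 1) \<in> Y" using col_mem[OF Y] ci by simp
  show ?thesis
  proof (cases "(i, j) = (i0, j0)")
    case True
    then have "Pd Y i0 j0 (rowlen Y j, j) (i, collen Y i - 1)"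
      unfolding Pd_def Let_def using nr ctop i0 cj x0_def by auto
    then show ?thesis using True unfolding Ed_def by simp
  next
    case False
    have "\<not> Pd Y i0 j0 (rowlen Y j, j) (i, collen Y i - 1)"
    proof
      assume "Pd Y i0 j0 (rowlen Y j, j) (i, collen Y i - 1)"
      then have h: "i + \<alpha> = rowlen Y j" "collen Y i - 1 = j + \<beta>" "x0 \<le> rowlen Y j" "j \<le> j0"
        "\<forall>j'. j \<le> j' \<and> j' < j0 \<longrightarrow> (rowlen Y j' - \<alpha>, j' + 1 + \<beta>) \<in> Y"
        unfolding Pd_def Let_def x0_def[symmetric] \<alpha>_def[symmetric] \<beta>_def[symmetric] by auto
      show False
      proof (cases "j = j0")
        case True
        then have "i = i0" using h(1) \<alpha>_def x0_def i0 by simp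
        then show False using False True by simp
      next
        case jne: False
        then have "(rowlen Y j - \<alpha>, j + 1 + \<beta>) \<in> Y" using h(4,5) by auto
        moreover have "rowlen Y j - \<alpha> = i" using h(1) by simp
        moreover have "j + 1 + \<beta> = collen Y i" using h(2) ci by simp
        ultimately show False using nc by simp
      qed
    qed
    then show ?thesis using False unfolding Ed_def by simp
  qed
qed

lemma Ed_u:
  assumes "i = rowlen Y j - 1"
  shows "Ed Y i0 j0 (i, collen Y i) (rowlen Y j - 1, j) = 0"
proof -
  have i0: "i0 < rowlen Y j0" using box row_mem[OF Y] by simp
  have "\<not> Pd Y i0 j0 (i, collen Y i) (rowlen Y j - 1, j)"
    unfolding Pd_def Let_def using assms i0 by auto
  then show ?thesis unfolding Ed_def by simp
qed

end

context
  fixes Y i0 j0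
  assumes Y: "young Y" and box: "(i0, j0) \<in> Y" and arm: "i0 = rowlen Y j0 - 1"
begin

lemma Pu_y:
  assumes m: "(x, y) \<notin> Y" and k: "(k1, k2) \<in> Y"
  shows "Pu Y i0 j0 (x, y + 1) (k1, k2) \<longleftrightarrow> (k2 \<ge> 1 \<and> Pu Y i0 j0 (x, y) (k1, k2 - 1))"
proof -
  define c0 where "c0 = collen Y i0"
  define \<gamma> where "\<gamma> = c0 - j0"
  have cj: "j0 < c0" using box col_mem[OF Y] c0_def by simp
  have m1: "(x, y + 1) \<notin> Y" using m young_down[OF Y, of x "y+1" x y] by auto
  have k': "k2 \<ge> 1 \<Longrightarrow> (k1, k2 - 1) \<in> Y" using k young_down[OF Y, of k1 k2 k1 "k2-1"] by auto
  have H: "\<not> (y + 1 = c0 \<and> x \<le> i0)"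
  proof
    assume h: "y + 1 = c0 \<and> x \<le> i0"
    then have "c0 \<le> collen Y x" using collen_anti[OF Y] c0_def by auto
    then have "(x, y) \<in> Y" using col_mem[OF Y] h by simp
    then show False using m by simp
  qed
  show ?thesis
    unfolding Pu_def Let_def c0_def[symmetric] \<gamma>_def[symmetric]
    using m m1 k k' H cj \<gamma>_def by (cases "k2 \<ge> 1") auto
qed

lemma Pu_x:
  assumes m: "(x, y) \<notin> Y" and k: "(k1, k2) \<in> Y"
  shows "Pu Y i0 j0 (x + 1, y) (k1, k2) \<longleftrightarrow> (k1 \<ge> 1 \<and> Pu Y i0 j0 (x, y) (k1 - 1, k2))"
proof -
  define c0 where "c0 = collen Y i0"
  define \<gamma> where "\<gamma> = c0 - j0"
  have cj: "j0 < c0" using box col_mem[OF Y] c0_def by simp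
  have m1: "(x + 1, y) \<notin> Y" using m young_down[OF Y, of "x+1" y x y] by auto
  have k': "k1 \<ge> 1 \<Longrightarrow> (k1 - 1, k2) \<in> Y" using k young_down[OF Y, of k1 k2 "k1-1" k2] by auto
  have cx: "collen Y x \<le> y" using m col_mem[OF Y] by (simp add: not_less)
  have H1: "k1 = x + 1 \<Longrightarrow> k2 + \<gamma> = y \<Longrightarrow> (x + 1, collen Y x - \<gamma>) \<in> Y"
    using young_down[OF Y k, of "x + 1" "collen Y x - \<gamma>"] cx by simp
  have H2: "\<not> (k1 = i0 + 1 \<and> k2 + \<gamma> = y \<and> c0 \<le> y)"
  proof
    assume h: "k1 = i0 + 1 \<and> k2 + \<gamma> = y \<and> c0 \<le> y"
    then have "j0 \<le> k2" using \<gamma>_def cj by linarith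
    then have "(i0 + 1, j0) \<in> Y" using young_down[OF Y k] h by simp
    then have "i0 + 1 < rowlen Y j0" using row_mem[OF Y] by simp
    then show False using arm by simp
  qed
  show ?thesis
    unfolding Pu_def Let_def c0_def[symmetric] \<gamma>_def[symmetric]
  proof (intro iffI; elim conjE)
    assume h: "(x + 1, y) \<notin> Y" "(k1, k2) \<in> Y" "fst (k1, k2) = fst (x + 1, y)"
      "snd (k1, k2) + \<gamma> = snd (x + 1, y)" "c0 \<le> snd (x + 1, y)" "fst (x + 1, y) \<le> i0"
      "\<forall>i'. fst (x + 1, y) \<le> i' \<and> i' < i0 \<longrightarrow> (i' + 1, collen Y i' - \<gamma>) \<in> Y"
    have l: "(x + 1, collen Y x - \<gamma>) \<in> Y" using H1 h by simp
    have all: "\<forall>i'. x \<le> i' \<and> i' < i0 \<longrightarrow> (i' + 1, collen Y i' - \<gamma>) \<in> Y"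
    proof (intro allI impI)
      fix i' assume "x \<le> i' \<and> i' < i0"
      then have "i' = x \<or> (x + 1 \<le> i' \<and> i' < i0)" by auto
      then show "(i' + 1, collen Y i' - \<gamma>) \<in> Y" using l h(7) by auto
    qed
    show "1 \<le> k1 \<and> (x, y) \<notin> Y \<and> (k1 - 1, k2) \<in> Y \<and> fst (k1 - 1, k2) = fst (x, y) \<and>
      snd (k1 - 1, k2) + \<gamma> = snd (x, y) \<and> c0 \<le> snd (x, y) \<and> fst (x, y) \<le> i0 \<and>
      (\<forall>i'. fst (x, y) \<le> i' \<and> i' < i0 \<longrightarrow> (i' + 1, collen Y i' - \<gamma>) \<in> Y)"
      using h all m k' by auto
  next
    assume h: "1 \<le> k1" "(x, y) \<notin> Y" "(k1 - 1, k2) \<in> Y" "fst (k1 - 1, k2) = fst (x, y)"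
      "snd (k1 - 1, k2) + \<gamma> = snd (x, y)" "c0 \<le> snd (x, y)" "fst (x, y) \<le> i0"
      "\<forall>i'. fst (x, y) \<le> i' \<and> i' < i0 \<longrightarrow> (i' + 1, collen Y i' - \<gamma>) \<in> Y"
    have "x \<noteq> i0" using H2 h by auto
    then show "(x + 1, y) \<notin> Y \<and> (k1, k2) \<in> Y \<and> fst (k1, k2) = fst (x + 1, y) \<and>
      snd (k1, k2) + \<gamma> = snd (x + 1, y) \<and> c0 \<le> snd (x + 1, y) \<and> fst (x + 1, y) \<le> i0 \<and>
      (\<forall>i'. fst (x + 1, y) \<le> i' \<and> i' < i0 \<longrightarrow> (i' + 1, collen Y i' - \<gamma>) \<in> Y)"
      using h m1 k by auto
  qed
qed

lemma Eu_TP: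
  assumes inv: "color a b n (i0, collen Y i0) = color a b n (i0, j0)"
  shows "Eu Y i0 j0 \<in> TP a b n Y"
proof -
  have cj: "j0 < collen Y i0" using box col_mem[OF Y] by simp
  have P: "Pu Y i0 j0 m k \<Longrightarrow> m \<notin> Y \<and> k \<in> Y \<and> fst k = fst m \<and> snd k + (collen Y i0 - j0) = snd m"
    for m k unfolding Pu_def Let_def by auto
  have TS: "Eu Y i0 j0 \<in> tangent_space a b n Y"
  proof (rule tangent_spaceI)
    fix m k assume "Eu Y i0 j0 m k \<noteq> 0"
    then have "Pu Y i0 j0 m k" unfolding Eu_def by (auto split: if_splits)
    then show "m \<notin> Y \<and> k \<in> Y" using P by blast
  next
    fix x y k1 k2 assume "(x, y) \<notin> Y" "(k1, k2) \<in> Y"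
    from Pu_x[OF this] show "Eu Y i0 j0 (x + 1, y) (k1, k2) = (if k1 \<ge> 1 then Eu Y i0 j0 (x, y) (k1 - 1, k2) else 0)"
      unfolding Eu_def by auto
  next
    fix x y k1 k2 assume "(x, y) \<notin> Y" "(k1, k2) \<in> Y"
    from Pu_y[OF this] show "Eu Y i0 j0 (x, y + 1) (k1, k2) = (if k2 \<ge> 1 then Eu Y i0 j0 (x, y) (k1, k2 - 1) else 0)"
      unfolding Eu_def by auto
  next
    fix m k assume "Eu Y i0 j0 m k \<noteq> 0"
    then have "Pu Y i0 j0 m k" unfolding Eu_def by (auto split: if_splits)
    then have h: "fst k = fst m" "snd k + (collen Y i0 - j0) = snd m" using P by auto
    show "color a b n m = color a b n k"
    proof (rule color_shift[OF inv])
      show "int (fst m) - int (fst k) = int (fst (i0, collen Y i0)) - int (fst (i0, j0))"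
        using h(1) by auto
      show "int (snd m) - int (snd k) = int (snd (i0, collen Y i0)) - int (snd (i0, j0))"
        using h(2) cj by auto
    qed
  qed
  show ?thesis unfolding TP_def
  proof (intro CollectI conjI TS allI impI)
    fix m k assume "Eu Y i0 j0 m k \<noteq> 0"
    then have "Pu Y i0 j0 m k" unfolding Eu_def by (auto split: if_splits)
    then have "fst k = fst m" "snd k + (collen Y i0 - j0) = snd m" using P by auto
    then show "lexpos m k" unfolding lexpos_def using cj by auto
  qed
qed

lemma Eu_u:
  assumes ij: "(i, j) \<in> Y" and ai: "i = rowlen Y j - 1"
  shows "Eu Y i0 j0 (i, collen Y i) (rowlen Y j - 1, j) = (if (i, j) = (i0, j0) then 1 else 0)"
proof -
  define \<gamma> where "\<gamma> = collen Y i0 - j0"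
  have cj: "j0 < collen Y i0" using box col_mem[OF Y] by simp
  have ci: "j < collen Y i" using ij col_mem[OF Y] by simp
  have nc: "\<And>i. (i, collen Y i) \<notin> Y" using col_mem[OF Y] by simp
  have il: "i < rowlen Y j" using ij row_mem[OF Y] by simp
  show ?thesis
  proof (cases "(i, j) = (i0, j0)")
    case True
    have e: "rowlen Y j - 1 = i" using ai by simp
    have "Pu Y i0 j0 (i, collen Y i) (i, j)"
      unfolding Pu_def Let_def using nc ij True cj by auto
    then show ?thesis unfolding e Eu_def using True by simp
  next
    case False
    have "\<not> Pu Y i0 j0 (i, collen Y i) (rowlen Y j - 1, j)"
    proof
      assume "Pu Y i0 j0 (i, collen Y i) (rowlen Y j - 1, j)"
      then have h: "j + \<gamma> = collen Y i" "collen Y i0 \<le> collen Y i" "i \<le> i0"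
        "\<forall>i'. i \<le> i' \<and> i' < i0 \<longrightarrow> (i' + 1, collen Y i' - \<gamma>) \<in> Y"
        unfolding Pu_def Let_def \<gamma>_def[symmetric] using ai by auto
      show False
      proof (cases "i = i0")
        case True
        then have "j = j0" using h(1) \<gamma>_def cj by simp
        then show False using False True by simp
      next
        case ine: False
        then have "(i + 1, collen Y i - \<gamma>) \<in> Y" using h(3,4) by auto
        moreover have "collen Y i - \<gamma> = j" using h(1) by simp
        ultimately have "i + 1 < rowlen Y j" using row_mem[OF Y] by simp
        then show False using ai by simp
      qed
    qed
    then show ?thesis using False ai unfolding Eu_def by simp
  qed
qed

lemma Eu_d:
  assumes ij: "(i, j) \<in> Y"
  shows "Eu Y i0 j0 (rowlen Y j, j) (i, collen Y i - 1) = 0"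
proof -
  have "i < rowlen Y j" using ij row_mem[OF Y] by simp
  then have "\<not> Pu Y i0 j0 (rowlen Y j, j) (i, collen Y i - 1)"
    unfolding Pu_def Let_def by auto
  then show ?thesis unfolding Eu_def by simp
qed

end



lemma TP_D: "M \<in> TP a b n Y \<Longrightarrow> M \<in> tangent_space a b n Y" unfolding TP_def by simp
lemma TP_lex: assumes "M \<in> TP a b n Y" "M m k \<noteq> 0" shows "lexpos m k"
  using assms(1) unfolding TP_def mem_Collect_eq
  apply (elim conjE)
  apply (drule spec[of _ m], drule spec[of _ k])
  apply (erule mp)
  apply (rule assms(2))
  done

lemma sum_nz: "(\<Sum>x\<in>S. f x) \<noteq> (0::complex) \<Longrightarrow> \<exists>x\<in>S. f x \<noteq> 0"
  by (meson sum.neutral)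

lemma TP_lin:
  assumes M: "M \<in> TP a b n Y" and F: "\<And>x. x \<in> S \<Longrightarrow> F x \<in> TP a b n Y"
  shows "(\<lambda>m k. M m k - (\<Sum>x\<in>S. c x * F x m k)) \<in> TP a b n Y"
proof -
  let ?D = "\<lambda>m k. M m k - (\<Sum>x\<in>S. c x * F x m k)"
  have MT: "M \<in> tangent_space a b n Y" and Ml: "\<And>m k. M m k \<noteq> 0 \<Longrightarrow> lexpos m k"
    using M unfolding TP_def by auto
  have FT: "\<And>x. x \<in> S \<Longrightarrow> F x \<in> tangent_space a b n Y"
    and Fl: "\<And>x m k. x \<in> S \<Longrightarrow> F x m k \<noteq> 0 \<Longrightarrow> lexpos m k"
    using F unfolding TP_def by auto
  have nz: "?D m k \<noteq> 0 \<Longrightarrow> M m k \<noteq> 0 \<or> (\<exists>x\<in>S. F x m k \<noteq> 0)" for m k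
  proof -
    assume h: "?D m k \<noteq> 0"
    show ?thesis
    proof (rule ccontr)
      assume "\<not> ?thesis"
      then have "M m k = 0" "\<And>x. x \<in> S \<Longrightarrow> F x m k = 0" by auto
      then have "?D m k = 0" by simp
      then show False using h by simp
    qed
  qed
  have TS: "?D \<in> tangent_space a b n Y"
  proof (rule tangent_spaceI)
    fix m k assume "?D m k \<noteq> 0"
    from nz[OF this] show "m \<notin> Y \<and> k \<in> Y"
      using T_supp[OF MT] T_supp[OF FT] by blast
  next
    fix m k assume "?D m k \<noteq> 0"
    from nz[OF this] show "color a b n m = color a b n k"
      using T_col[OF MT] T_col[OF FT] by blast
  next
    fix x y k1 k2 assume h: "(x, y) \<notin> Y" "(k1, k2) \<in> Y"
    have e: "\<And>z. z \<in> S \<Longrightarrow> F z (x + 1, y) (k1, k2) = (if 1 \<le> k1 then F z (x, y) (k1 - 1, k2) else 0)"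
      using T_x[OF FT h] by blast
    show "?D (x + 1, y) (k1, k2) = (if 1 \<le> k1 then ?D (x, y) (k1 - 1, k2) else 0)"
      using T_x[OF MT h] e by (cases "1 \<le> k1") (simp_all cong: sum.cong)
  next
    fix x y k1 k2 assume h: "(x, y) \<notin> Y" "(k1, k2) \<in> Y"
    have e: "\<And>z. z \<in> S \<Longrightarrow> F z (x, y + 1) (k1, k2) = (if 1 \<le> k2 then F z (x, y) (k1, k2 - 1) else 0)"
      using T_y[OF FT h] by blast
    show "?D (x, y + 1) (k1, k2) = (if 1 \<le> k2 then ?D (x, y) (k1, k2 - 1) else 0)"
      using T_y[OF MT h] e by (cases "1 \<le> k2") (simp_all cong: sum.cong)
  qed
  show ?thesis unfolding TP_def
  proof (intro CollectI conjI TS allI impI)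
    fix m k assume "?D m k \<noteq> 0"
    from nz[OF this] show "lexpos m k" using Ml Fl by blast
  qed
qed


definition BD :: "int \<Rightarrow> int \<Rightarrow> nat \<Rightarrow> box set \<Rightarrow> box set" where
  "BD a b n Y = {s \<in> Y. color a b n (rowlen Y (snd s), snd s) = color a b n (fst s, collen Y (fst s) - 1)}"
definition BU :: "int \<Rightarrow> int \<Rightarrow> nat \<Rightarrow> box set \<Rightarrow> box set" where
  "BU a b n Y = {s \<in> Y. fst s = rowlen Y (snd s) - 1 \<and> color a b n (fst s, collen Y (fst s)) = color a b n (fst s, snd s)}"

definition dm :: "box set \<Rightarrow> box \<Rightarrow> box" where "dm Y s = (rowlen Y (snd s), snd s)"
definition dk :: "box set \<Rightarrow> box \<Rightarrow> box" where "dk Y s = (fst s, collen Y (fst s) - 1)"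
definition um :: "box set \<Rightarrow> box \<Rightarrow> box" where "um Y s = (fst s, collen Y (fst s))"
definition uk :: "box set \<Rightarrow> box \<Rightarrow> box" where "uk Y s = (rowlen Y (snd s) - 1, snd s)"

definition EdS where "EdS Y s = Ed Y (fst s) (snd s)"
definition EuS where "EuS Y s = Eu Y (fst s) (snd s)"

context
  fixes Y :: "box set" and a b :: int and n :: nat
  assumes Y: "young Y"
begin

lemma EdS_d: assumes "s \<in> Y" "s' \<in> Y" shows "EdS Y s (dm Y s') (dk Y s') = (if s' = s then 1 else 0)"
proof -
  obtain i j i' j' where e: "s = (i, j)" "s' = (i', j')" by (cases s, cases s')
  show ?thesis using Ed_d[OF Y, of i j i' j'] assms unfolding e EdS_def dm_def dk_def by simp
qed

lemma EdS_u: assumes "s \<in> Y" "s' \<in> BU a b n Y" shows "EdS Y s (um Y s') (uk Y s') = 0"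
proof -
  obtain i j i' j' where e: "s = (i, j)" "s' = (i', j')" by (cases s, cases s')
  have "i' = rowlen Y j' - 1" using assms(2) unfolding e BU_def by simp
  from Ed_u[OF Y _ this, of i j] assms show ?thesis unfolding e EdS_def um_def uk_def by simp
qed

lemma EuS_u: assumes "s \<in> BU a b n Y" "s' \<in> BU a b n Y" shows "EuS Y s (um Y s') (uk Y s') = (if s' = s then 1 else 0)"
proof -
  obtain i j i' j' where e: "s = (i, j)" "s' = (i', j')" by (cases s, cases s')
  have h: "(i, j) \<in> Y" "i = rowlen Y j - 1" "(i', j') \<in> Y" "i' = rowlen Y j' - 1"
    using assms unfolding e BU_def by auto
  from Eu_u[OF Y h] show ?thesis unfolding e EuS_def um_def uk_def by simp
qed

lemma EuS_d: assumes "s \<in> BU a b n Y" "s' \<in> Y" shows "EuS Y s (dm Y s') (dk Y s') = 0"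
proof -
  obtain i j i' j' where e: "s = (i, j)" "s' = (i', j')" by (cases s, cases s')
  have h: "(i, j) \<in> Y" "i = rowlen Y j - 1" "(i', j') \<in> Y"
    using assms unfolding e BU_def by auto
  from Eu_d[OF Y h] show ?thesis unfolding e EuS_def dm_def dk_def by simp
qed

lemma EdS_TP: assumes "s \<in> BD a b n Y" shows "EdS Y s \<in> TP a b n Y"
proof -
  obtain i j where e: "s = (i, j)" by (cases s)
  have h: "(i, j) \<in> Y" "color a b n (rowlen Y j, j) = color a b n (i, collen Y i - 1)"
    using assms unfolding e BD_def by auto
  from Ed_TP[OF Y h] show ?thesis unfolding e EdS_def by simp
qed

lemma EuS_TP: assumes "s \<in> BU a b n Y" shows "EuS Y s \<in> TP a b n Y"
proof -
  obtain i j where e: "s = (i, j)" by (cases s)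
  have h: "(i, j) \<in> Y" "i = rowlen Y j - 1" "color a b n (i, collen Y i) = color a b n (i, j)"
    using assms unfolding e BU_def by auto
  from Eu_TP[OF Y h] show ?thesis unfolding e EuS_def by simp
qed

lemma BD_sub: "BD a b n Y \<subseteq> Y" unfolding BD_def by auto
lemma BU_sub: "BU a b n Y \<subseteq> Y" unfolding BU_def by auto

lemma TP_zero:
  assumes D: "D \<in> TP a b n Y"
    and vd: "\<And>s. s \<in> BD a b n Y \<Longrightarrow> D (dm Y s) (dk Y s) = 0"
    and vu: "\<And>s. s \<in> BU a b n Y \<Longrightarrow> D (um Y s) (uk Y s) = 0"
  shows "D m k = 0"
proof (rule ccontr)
  assume nz: "D m k \<noteq> 0"
  have DT: "D \<in> tangent_space a b n Y" using D by (rule TP_D)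
  have lx: "lexpos m k" using D nz by (rule TP_lex)
  have van1: "\<And>i j. (i, j) \<in> Y \<Longrightarrow> color a b n (rowlen Y j, j) = color a b n (i, collen Y i - 1)
                 \<Longrightarrow> D (rowlen Y j, j) (i, collen Y i - 1) = 0"
  proof -
    fix i j assume h: "(i, j) \<in> Y" "color a b n (rowlen Y j, j) = color a b n (i, collen Y i - 1)"
    then have "(i, j) \<in> BD a b n Y" unfolding BD_def by simp
    from vd[OF this] show "D (rowlen Y j, j) (i, collen Y i - 1) = 0" unfolding dm_def dk_def by simp
  qed
  have van2: "\<And>i j. (i, j) \<in> Y \<Longrightarrow> i = rowlen Y j - 1 \<Longrightarrow> color a b n (i, collen Y i) = color a b n (i, j)
                 \<Longrightarrow> D (i, collen Y i) (i, j) = 0"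
  proof -
    fix i j assume h: "(i, j) \<in> Y" "i = rowlen Y j - 1" "color a b n (i, collen Y i) = color a b n (i, j)"
    then have bu: "(i, j) \<in> BU a b n Y" unfolding BU_def by simp
    have e: "rowlen Y j - 1 = i" using h(2) by simp
    from vu[OF bu] show "D (i, collen Y i) (i, j) = 0" unfolding um_def uk_def fst_conv snd_conv e .
  qed
  obtain m1 m2 k1 k2 where mk: "m = (m1, m2)" "k = (k1, k2)" by (cases m, cases k)
  show False
  proof (cases "k1 < m1")
    case True
    have "D (m1, m2) (k1, k2) \<noteq> 0" using nz unfolding mk .
    from L2d[OF Y DT van1 this True] show False .
  next
    case False
    then have "k1 = m1" using lx unfolding mk lexpos_def by simp
    then have "D (m1, m2) (m1, k2) \<noteq> 0" using nz unfolding mk by simp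
    from L2u[OF Y DT van2 this] show False .
  qed
qed

end




lemma dim_TP:
  fixes Y :: "box set" and a b :: int and n :: nat
  assumes Y: "young Y"
  shows "vector_space.dim mscale (TP a b n Y) = card (BD a b n Y) + card (BU a b n Y)"
proof -
  interpret vs: vector_space mscale by (rule vs_mscale)
  let ?BD = "BD a b n Y" and ?BU = "BU a b n Y"
  let ?B = "EdS Y ` ?BD \<union> EuS Y ` ?BU"
  have finY: "finite Y" using Y by (rule young_finite)
  have finD: "finite ?BD" using finite_subset[OF BD_sub[OF Y] finY] .
  have finU: "finite ?BU" using finite_subset[OF BU_sub[OF Y] finY] .
  have BDY: "\<And>s. s \<in> ?BD \<Longrightarrow> s \<in> Y" using BD_sub[OF Y] by blast
  have BUY: "\<And>s. s \<in> ?BU \<Longrightarrow> s \<in> Y" using BU_sub[OF Y] by blast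
  have dd: "\<And>s s'. s \<in> ?BD \<Longrightarrow> s' \<in> ?BD \<Longrightarrow> EdS Y s (dm Y s') (dk Y s') = (if s' = s then 1 else 0)"
    using EdS_d[OF Y] BDY by blast
  have du: "\<And>s s'. s \<in> ?BD \<Longrightarrow> s' \<in> ?BU \<Longrightarrow> EdS Y s (um Y s') (uk Y s') = 0"
    using EdS_u[OF Y] BDY by blast
  have uu: "\<And>s s'. s \<in> ?BU \<Longrightarrow> s' \<in> ?BU \<Longrightarrow> EuS Y s (um Y s') (uk Y s') = (if s' = s then 1 else 0)"
    using EuS_u[OF Y] by blast
  have ud: "\<And>s s'. s \<in> ?BU \<Longrightarrow> s' \<in> ?BD \<Longrightarrow> EuS Y s (dm Y s') (dk Y s') = 0"
    using EuS_d[OF Y] BDY by blast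
  have injD: "inj_on (EdS Y) ?BD"
  proof (rule inj_onI)
    fix s s' assume h: "s \<in> ?BD" "s' \<in> ?BD" "EdS Y s = EdS Y s'"
    have "EdS Y s' (dm Y s) (dk Y s) = 1" using dd[OF h(1) h(1)] h(3) by simp
    then show "s = s'" using dd[OF h(2) h(1)] by (simp split: if_splits)
  qed
  have injU: "inj_on (EuS Y) ?BU"
  proof (rule inj_onI)
    fix s s' assume h: "s \<in> ?BU" "s' \<in> ?BU" "EuS Y s = EuS Y s'"
    have "EuS Y s' (um Y s) (uk Y s) = 1" using uu[OF h(1) h(1)] h(3) by simp
    then show "s = s'" using uu[OF h(2) h(1)] by (simp split: if_splits)
  qed
  have disj: "EdS Y ` ?BD \<inter> EuS Y ` ?BU = {}"
  proof (rule ccontr)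
    assume "EdS Y ` ?BD \<inter> EuS Y ` ?BU \<noteq> {}"
    then obtain s s' where h: "s \<in> ?BD" "s' \<in> ?BU" "EdS Y s = EuS Y s'" by blast
    have "EdS Y s (dm Y s) (dk Y s) = 1" using dd[OF h(1) h(1)] by simp
    moreover have "EuS Y s' (dm Y s) (dk Y s) = 0" using ud[OF h(2) h(1)] .
    ultimately show False using h(3) by simp
  qed
  have card: "card ?B = card ?BD + card ?BU"
    using card_Un_disjoint[OF finite_imageI[OF finD] finite_imageI[OF finU] disj]
      card_image[OF injD] card_image[OF injU] by simp
  have sub: "?B \<subseteq> TP a b n Y" using EdS_TP[OF Y] EuS_TP[OF Y] by blast
  have ind: "vs.independent ?B"
  proof (rule dual_independent)
    fix v assume "v \<in> ?B"
    then consider (d) s where "s \<in> ?BD" "v = EdS Y s" | (u) s where "s \<in> ?BU" "v = EuS Y s" by blast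
    then show "\<exists>m k. v m k = 1 \<and> (\<forall>w\<in>?B. w \<noteq> v \<longrightarrow> w m k = 0)"
    proof cases
      case d
      show ?thesis
      proof (intro exI conjI ballI impI)
        show "v (dm Y s) (dk Y s) = 1" using dd[OF d(1) d(1)] d(2) by simp
        fix w assume w: "w \<in> ?B" "w \<noteq> v"
        then consider (d') s' where "s' \<in> ?BD" "w = EdS Y s'" | (u') s' where "s' \<in> ?BU" "w = EuS Y s'" by blast
        then show "w (dm Y s) (dk Y s) = 0"
        proof cases
          case d'
          then have "s' \<noteq> s" using w(2) d(2) by auto
          then show ?thesis using dd[OF d'(1) d(1)] d'(2) by simp
        next
          case u'
          then show ?thesis using ud[OF u'(1) d(1)] by simp
        qed
      qed
    next
      case u
      show ?thesis
      proof (intro exI conjI ballI impI)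
        show "v (um Y s) (uk Y s) = 1" using uu[OF u(1) u(1)] u(2) by simp
        fix w assume w: "w \<in> ?B" "w \<noteq> v"
        then consider (d') s' where "s' \<in> ?BD" "w = EdS Y s'" | (u') s' where "s' \<in> ?BU" "w = EuS Y s'" by blast
        then show "w (um Y s) (uk Y s) = 0"
        proof cases
          case u'
          then have "s' \<noteq> s" using w(2) u(2) by auto
          then show ?thesis using uu[OF u'(1) u(1)] u'(2) by simp
        next
          case d'
          then show ?thesis using du[OF d'(1) u(1)] by simp
        qed
      qed
    qed
  qed
  have span: "TP a b n Y \<subseteq> vs.span ?B"
  proof
    fix M assume M: "M \<in> TP a b n Y"
    define cD where "cD s = M (dm Y s) (dk Y s)" for s
    define cU where "cU s = M (um Y s) (uk Y s)" for s
    define D1 where "D1 = (\<lambda>m k. M m k - (\<Sum>s\<in>?BD. cD s * EdS Y s m k))"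
    define D where "D = (\<lambda>m k. D1 m k - (\<Sum>s\<in>?BU. cU s * EuS Y s m k))"
    have D1T: "D1 \<in> TP a b n Y" unfolding D1_def by (rule TP_lin[OF M EdS_TP[OF Y]])
    have DT: "D \<in> TP a b n Y" unfolding D_def by (rule TP_lin[OF D1T EuS_TP[OF Y]])
    have vd: "D (dm Y s0) (dk Y s0) = 0" if s0: "s0 \<in> ?BD" for s0
    proof -
      have "(\<Sum>s\<in>?BD. cD s * EdS Y s (dm Y s0) (dk Y s0)) = (\<Sum>s\<in>?BD. if s0 = s then cD s else 0)"
        using dd[OF _ s0] by (intro sum.cong) auto
      also have "\<dots> = cD s0" using finD s0 by simp
      finally have a: "(\<Sum>s\<in>?BD. cD s * EdS Y s (dm Y s0) (dk Y s0)) = cD s0" .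
      have b: "(\<Sum>s\<in>?BU. cU s * EuS Y s (dm Y s0) (dk Y s0)) = 0"
        using ud[OF _ s0] by (intro sum.neutral) auto
      show ?thesis unfolding D_def D1_def using a b cD_def by simp
    qed
    have vu: "D (um Y s0) (uk Y s0) = 0" if s0: "s0 \<in> ?BU" for s0
    proof -
      have "(\<Sum>s\<in>?BU. cU s * EuS Y s (um Y s0) (uk Y s0)) = (\<Sum>s\<in>?BU. if s0 = s then cU s else 0)"
        using uu[OF _ s0] by (intro sum.cong) auto
      also have "\<dots> = cU s0" using finU s0 by simp
      finally have a: "(\<Sum>s\<in>?BU. cU s * EuS Y s (um Y s0) (uk Y s0)) = cU s0" .
      have b: "(\<Sum>s\<in>?BD. cD s * EdS Y s (um Y s0) (uk Y s0)) = 0"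
        using du[OF _ s0] by (intro sum.neutral) auto
      show ?thesis unfolding D_def D1_def using a b cU_def by simp
    qed
    have Dz: "D m k = 0" for m k using TP_zero[OF Y DT vd vu] .
    have Meq: "M = (\<Sum>s\<in>?BD. mscale (cD s) (EdS Y s)) + (\<Sum>s\<in>?BU. mscale (cU s) (EuS Y s))"
    proof (intro ext)
      fix m k
      have "D m k = 0" by (rule Dz)
      then show "M m k = ((\<Sum>s\<in>?BD. mscale (cD s) (EdS Y s)) + (\<Sum>s\<in>?BU. mscale (cU s) (EuS Y s))) m k"
        unfolding D_def D1_def by (simp add: sum_fun_apply2 mscale_def algebra_simps)
    qed
    have s1: "(\<Sum>s\<in>?BD. mscale (cD s) (EdS Y s)) \<in> vs.span ?B"
      by (intro vs.span_sum vs.span_scale vs.span_base) blast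
    have s2: "(\<Sum>s\<in>?BU. mscale (cU s) (EuS Y s)) \<in> vs.span ?B"
      by (intro vs.span_sum vs.span_scale vs.span_base) blast
    show "M \<in> vs.span ?B" unfolding Meq by (rule vs.span_add[OF s1 s2])
  qed
  show ?thesis by (rule vs.dim_unique[OF sub span ind card])
qed




lemma snd_bound:
  assumes Y: "young Y" and M: "M \<in> tangent_space a b n Y" and nz: "M m k \<noteq> 0"
  shows "snd m \<le> snd k + card Y"
proof (rule ccontr)
  obtain m1 m2 k1 k2 where e: "m = (m1, m2)" "k = (k1, k2)" by (cases m, cases k)
  assume "\<not> ?thesis"
  then have gt: "m2 > k2 + card Y" using e by simp
  define y where "y = m2 - (k2 + 1)"
  have yC: "card Y \<le> y" using gt y_def by simp
  have nY: "(m1, y) \<notin> Y" using box_bound(2)[OF Y, of m1 y] yC by auto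
  have "M (m1, y + (k2 + 1)) (k1, k2) \<noteq> 0" using nz e gt y_def by simp
  from downwalk[OF Y M nY this] show False by simp
qed

lemma weight_iff:
  fixes p q :: int
  assumes Y: "young Y" and M: "M \<in> tangent_space a b n Y" and nz: "M m k \<noteq> 0"
    and q: "0 < q" and p: "int (card Y) * q < p"
  shows "0 < T_weight p q m k \<longleftrightarrow> lexpos m k"
proof -
  define C where "C = int (card Y)"
  have kY: "k \<in> Y" using T_supp[OF M nz] by simp
  have k2C: "snd k < card Y" using box_bound(2)[OF Y, of "fst k" "snd k"] kY by simp
  have mb: "snd m \<le> snd k + card Y" by (rule snd_bound[OF Y M nz])
  define A where "A = int (fst k) - int (fst m)"
  define B where "B = int (snd k) - int (snd m)"
  have Bl: "B \<le> C" using k2C unfolding B_def C_def by simp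
  have Bg: "- C \<le> B" using mb unfolding B_def C_def by simp
  have w: "T_weight p q m k = - (p * A + q * B)" unfolding T_weight_def A_def B_def by simp
  have pC: "C * q < p" using p C_def by simp
  have "0 \<le> C * q" using q C_def by simp
  then have p0: "0 < p" using pC by linarith
  have qB1: "q * B \<le> q * C" using Bl q by (simp add: mult_left_mono)
  have qB2: "q * (- C) \<le> q * B" using mult_left_mono[OF Bg, of q] q by simp
  have Cq: "q * C = C * q" by (simp add: mult.commute)
  consider (lt) "A \<le> -1" | (eq) "A = 0" | (gt) "1 \<le> A" by linarith
  then show ?thesis
  proof cases
    case lt
    have "p * A \<le> p * (-1)" using mult_left_mono[OF lt, of p] p0 by simp
    then have "0 < T_weight p q m k" using w qB1 pC Cq by linarith
    moreover have "lexpos m k" using lt unfolding A_def lexpos_def by simp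
    ultimately show ?thesis by simp
  next
    case eq
    have "0 < T_weight p q m k \<longleftrightarrow> q * B < 0" using w eq by simp
    also have "\<dots> \<longleftrightarrow> B < 0" using q by (simp add: mult_less_0_iff)
    also have "\<dots> \<longleftrightarrow> lexpos m k" using eq unfolding A_def B_def lexpos_def by auto
    finally show ?thesis .
  next
    case gt
    have "p * 1 \<le> p * A" using mult_left_mono[OF gt, of p] p0 by simp
    then have "\<not> 0 < T_weight p q m k" using w qB2 pC Cq by linarith
    moreover have "\<not> lexpos m k" using gt unfolding A_def lexpos_def by auto
    ultimately show ?thesis by simp
  qed
qed

lemma tangent_pos_TP:
  fixes p q :: int
  assumes Y: "young Y" and q: "0 < q" and p: "int (card Y) * q < p"
  shows "tangent_pos a b n p q Y = TP a b n Y"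
proof (intro set_eqI iffI)
  fix M assume h: "M \<in> tangent_pos a b n p q Y"
  then have MT: "M \<in> tangent_space a b n Y" unfolding tangent_pos_def by simp
  have w: "\<And>m k. M m k \<noteq> 0 \<Longrightarrow> 0 < T_weight p q m k"
  proof -
    fix m k assume nz: "M m k \<noteq> 0"
    show "0 < T_weight p q m k"
      using h unfolding tangent_pos_def mem_Collect_eq
      apply (elim conjE)
      apply (drule spec[of _ m], drule spec[of _ k])
      apply (erule mp)
      apply (rule nz)
      done
  qed
  show "M \<in> TP a b n Y" unfolding TP_def
  proof (intro CollectI conjI MT allI impI)
    fix m k assume nz: "M m k \<noteq> 0"
    then show "lexpos m k" using weight_iff[OF Y MT nz q p] w[OF nz] by simp
  qed
next
  fix M assume h: "M \<in> TP a b n Y"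
  have MT: "M \<in> tangent_space a b n Y" using h by (rule TP_D)
  show "M \<in> tangent_pos a b n p q Y" unfolding tangent_pos_def
  proof (intro CollectI conjI MT allI impI)
    fix m k assume nz: "M m k \<noteq> 0"
    then show "0 < T_weight p q m k" using weight_iff[OF Y MT nz q p] TP_lex[OF h nz] by simp
  qed
qed

lemma inv_color: "inv_arrow a b n (int x1, int y1) (int x2, int y2) \<longleftrightarrow> color a b n (x1, y1) = color a b n (x2, y2)"
proof -
  have e: "a * (int x1 - int x2) + b * (int y1 - int y2) = (a * int x1 + b * int y1) - (a * int x2 + b * int y2)"
    by (simp add: algebra_simps)
  show ?thesis unfolding inv_arrow_def color_def fst_conv snd_conv e
    by (simp add: mod_eq_dvd_iff mod_eq_0_iff_dvd)
qed

lemma betti_eq: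
  assumes Y: "young Y"
  shows "betti a b n Y = card (BD a b n Y) + card (BU a b n Y)"
proof -
  have 1: "{(i, j) \<in> Y. inv_arrow a b n (int (rowlen Y j), int j) (int i, int (collen Y i) - 1)} = BD a b n Y"
  proof (intro set_eqI)
    fix s :: box
    obtain i j where s: "s = (i, j)" by (cases s)
    show "s \<in> {(i, j) \<in> Y. inv_arrow a b n (int (rowlen Y j), int j) (int i, int (collen Y i) - 1)} \<longleftrightarrow> s \<in> BD a b n Y"
    proof (cases "(i, j) \<in> Y")
      case True
      then have "j < collen Y i" using col_mem[OF Y] by simp
      then have e: "int (collen Y i) - 1 = int (collen Y i - 1)" by simp
      show ?thesis unfolding s BD_def mem_Collect_eq case_prod_conv fst_conv snd_conv e inv_color by simp
    next
      case False
      then show ?thesis unfolding s BD_def by simp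
    qed
  qed
  have 2: "{(i, j) \<in> Y. inv_arrow a b n (int i, int (collen Y i)) (int (rowlen Y j) - 1, int j)
                      \<and> int i = int (rowlen Y j) - 1} = BU a b n Y"
  proof (intro set_eqI)
    fix s :: box
    obtain i j where s: "s = (i, j)" by (cases s)
    show "s \<in> {(i, j) \<in> Y. inv_arrow a b n (int i, int (collen Y i)) (int (rowlen Y j) - 1, int j)
                      \<and> int i = int (rowlen Y j) - 1} \<longleftrightarrow> s \<in> BU a b n Y"
    proof (cases "(i, j) \<in> Y")
      case True
      then have "i < rowlen Y j" using row_mem[OF Y] by simp
      then have e: "int (rowlen Y j) - 1 = int (rowlen Y j - 1)" by simp
      have ii: "int i = int (rowlen Y j - 1) \<longleftrightarrow> i = rowlen Y j - 1" by simp
      have "(inv_arrow a b n (int i, int (collen Y i)) (int (rowlen Y j - 1), int j) \<and> i = rowlen Y j - 1)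
         \<longleftrightarrow> (i = rowlen Y j - 1 \<and> color a b n (i, collen Y i) = color a b n (i, j))"
        unfolding inv_color by auto
      then show ?thesis unfolding s BU_def mem_Collect_eq case_prod_conv fst_conv snd_conv e ii using True by simp
    next
      case False
      then show ?thesis unfolding s BU_def by simp
    qed
  qed
  show ?thesis unfolding betti_def 1 2 ..
qed

theorem proposition3p1:
  fixes r n :: nat and a b :: int
  assumes "r \<ge> 1" and "n \<ge> 1" and "gcd a b = 1"
  shows "\<exists>N::int. \<forall>p q :: int. 0 < q \<and> N * q < p \<longrightarrow>
           (\<forall>Y \<in> Bset r a b n. cdim (tangent_pos a b n p q Y) = betti a b n Y)"
proof (intro exI allI impI ballI)
  fix p q :: int and Y
  assume pq: "0 < q \<and> int (r * n) * q < p" and YB: "Y \<in> Bset r a b n"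
  have Y: "young Y" and cY: "card Y = r * n" using YB unfolding Bset_def by auto
  have "tangent_pos a b n p q Y = TP a b n Y"
    using tangent_pos_TP[OF Y] pq cY by simp
  then show "cdim (tangent_pos a b n p q Y) = betti a b n Y"
    unfolding cdim_def using dim_TP[OF Y] betti_eq[OF Y] by simp
qed



end
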